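(* Let $G$ be a connected graph and $T$ a spanning tree of $G$ rooted in $s$. Then $T$ is an $\mathcal L$-tree of LexDFS on $G$ if and only if $T$ is an $\mathcal L$-tree of CompLexDFS on $G$. Likewise, $T$ is an $\mathcal L$-tree of LexBFS on $G$ if and only if $T$ is an $\mathcal L$-tree of CompLexBFS on $G$.
   Context: Graphs are finite, simple, undirected. LexDFS started at $s$: label $s$ with $(0)$, all others with the empty label; for $i=1,\dots,n$ pick an unnumbered vertex $v$ with lexicographically largest label, set $\sigma(i)=v$, and prepend $i$ to the label of each unnumbered neighbor of $v$. LexBFS started at $s$: label $s$ with $(n)$, others empty; same loop but append $n-i$ to the label of each unnumbered neighbor of $v$. CompLexDFS (resp. CompLexBFS) is the same as LexDFS (resp. LexBFS) except that the choice step becomes: choose a connected component $C$ of the subgraph induced by the unnumbered vertices and pick a vertex of $C$ with lexicographically largest label (among vertices of $C$). A $\mathcal P$-order is any possible output of search $\mathcal P$. The $\mathcal L$-tree of a vertex order $(v_1,\dots,v_n)$ is the spanning tree rooted at $v_1$ with an edge from each $v_i$ ($i>1$) to its rightmost neighbor $v_j$ with $j<i$. A spanning tree $T$ rooted at $s$ is an $\mathcal L$-tree of $\mathcal P$ on $G$ if some $\mathcal P$-order of $G$ starting at $s$ has $\mathcal L$-tree $T$ (same edge set and root). *)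

theory Defs
  imports Main
begin

definition simple_graph :: "'a set \<Rightarrow> 'a set set \<Rightarrow> bool" where
  "simple_graph V E \<longleftrightarrow> finite V \<and>
     (\<forall>e\<in>E. \<exists>u v. e = {u, v} \<and> u \<noteq> v \<and> u \<in> V \<and> v \<in> V)"

definition induced_rel :: "'a set set \<Rightarrow> 'a set \<Rightarrow> ('a \<times> 'a) set" where
  "induced_rel E U = {(a, b). a \<in> U \<and> b \<in> U \<and> {a, b} \<in> E}"

definition same_comp :: "'a set set \<Rightarrow> 'a set \<Rightarrow> 'a \<Rightarrow> 'a \<Rightarrow> bool" where
  "same_comp E U x y \<longleftrightarrow> x \<in> U \<and> y \<in> U \<and> (x, y) \<in> (induced_rel E U)\<^sup>*"

definition graph_connected :: "'a set \<Rightarrow> 'a set set \<Rightarrow> bool" where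
  "graph_connected V E \<longleftrightarrow> V \<noteq> {} \<and> (\<forall>x\<in>V. \<forall>y\<in>V. same_comp E V x y)"

definition spanning_tree :: "'a set \<Rightarrow> 'a set set \<Rightarrow> 'a set set \<Rightarrow> bool" where
  "spanning_tree V E T \<longleftrightarrow> T \<subseteq> E \<and> graph_connected V T \<and> card T = card V - 1"

text \<open>Strict lexicographic order on labels (a proper prefix is smaller).\<close>
definition lex_less :: "nat list \<Rightarrow> nat list \<Rightarrow> bool" where
  "lex_less xs ys \<longleftrightarrow> (xs, ys) \<in> lexord {(u, v). u < v}"

text \<open>Labels during LexDFS: label of w after the first k vertices sigma!0..sigma!(k-1)
  (numbered 1..k) have been processed.\<close>
fun dfs_label :: "'a set set \<Rightarrow> 'a \<Rightarrow> 'a list \<Rightarrow> nat \<Rightarrow> 'a \<Rightarrow> nat list" where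
  "dfs_label E s \<sigma> 0 w = (if w = s then [0] else [])"
| "dfs_label E s \<sigma> (Suc k) w =
     (if {\<sigma> ! k, w} \<in> E \<and> w \<notin> set (take (Suc k) \<sigma>)
      then Suc k # dfs_label E s \<sigma> k w else dfs_label E s \<sigma> k w)"

fun bfs_label :: "nat \<Rightarrow> 'a set set \<Rightarrow> 'a \<Rightarrow> 'a list \<Rightarrow> nat \<Rightarrow> 'a \<Rightarrow> nat list" where
  "bfs_label n E s \<sigma> 0 w = (if w = s then [n] else [])"
| "bfs_label n E s \<sigma> (Suc k) w =
     (if {\<sigma> ! k, w} \<in> E \<and> w \<notin> set (take (Suc k) \<sigma>)
      then bfs_label n E s \<sigma> k w @ [n - Suc k] else bfs_label n E s \<sigma> k w)"

datatype search = LexDFS | LexBFS | CompLexDFS | CompLexBFS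

definition search_label :: "search \<Rightarrow> 'a set \<Rightarrow> 'a set set \<Rightarrow> 'a \<Rightarrow> 'a list \<Rightarrow> nat \<Rightarrow> 'a \<Rightarrow> nat list" where
  "search_label P V E s \<sigma> k w =
     (case P of LexDFS \<Rightarrow> dfs_label E s \<sigma> k w
              | CompLexDFS \<Rightarrow> dfs_label E s \<sigma> k w
              | LexBFS \<Rightarrow> bfs_label (card V) E s \<sigma> k w
              | CompLexBFS \<Rightarrow> bfs_label (card V) E s \<sigma> k w)"

definition is_comp_search :: "search \<Rightarrow> bool" where
  "is_comp_search P \<longleftrightarrow> P = CompLexDFS \<or> P = CompLexBFS"

text \<open>At step i (0-based index k = i-1) with unnumbered set U, the chosen vertex sigma!k has
  a lexicographically largest label among all of U (LexDFS/LexBFS), resp. among the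
  vertices of its own connected component of G[U] (CompLexDFS/CompLexBFS; choosing a
  component C and a label-maximal vertex of C is the same as choosing a vertex whose label
  is maximal within its component).\<close>
definition search_order :: "search \<Rightarrow> 'a set \<Rightarrow> 'a set set \<Rightarrow> 'a \<Rightarrow> 'a list \<Rightarrow> bool" where
  "search_order P V E s \<sigma> \<longleftrightarrow>
     distinct \<sigma> \<and> set \<sigma> = V \<and>
     (\<forall>k < length \<sigma>.
        let U = V - set (take k \<sigma>) in
        \<forall>w \<in> U. (\<not> is_comp_search P \<or> same_comp E U (\<sigma> ! k) w) \<longrightarrow>
          \<not> lex_less (search_label P V E s \<sigma> k (\<sigma> ! k)) (search_label P V E s \<sigma> k w))"

definition L_tree_edges :: "'a set set \<Rightarrow> 'a list \<Rightarrow> 'a set set" where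
  "L_tree_edges E \<sigma> =
     {{\<sigma> ! i, \<sigma> ! j} | i j. 0 < i \<and> i < length \<sigma> \<and> j < i \<and> {\<sigma> ! j, \<sigma> ! i} \<in> E \<and>
        (\<forall>k. j < k \<and> k < i \<longrightarrow> {\<sigma> ! k, \<sigma> ! i} \<notin> E)}"

definition is_L_tree :: "search \<Rightarrow> 'a set \<Rightarrow> 'a set set \<Rightarrow> 'a \<Rightarrow> 'a set set \<Rightarrow> bool" where
  "is_L_tree P V E s T \<longleftrightarrow>
     (\<exists>\<sigma>. search_order P V E s \<sigma> \<and> \<sigma> \<noteq> [] \<and> hd \<sigma> = s \<and> L_tree_edges E \<sigma> = T)"

end

theory Submission
  imports Defs "HOL-Library.List_Lexorder"
begin

lemma lex_less_iff: "lex_less xs ys \<longleftrightarrow> xs < ys"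
  by (simp add: lex_less_def list_less_def)

definition pos :: "'a list \<Rightarrow> 'a \<Rightarrow> nat" where
  "pos xs v = (LEAST i. i < length xs \<and> xs ! i = v)"

lemma pos_nth: "distinct xs \<Longrightarrow> i < length xs \<Longrightarrow> pos xs (xs ! i) = i"
  unfolding pos_def
  by (rule Least_equality) (auto simp: nth_eq_iff_index_eq)

lemma nth_pos: "v \<in> set xs \<Longrightarrow> pos xs v < length xs \<and> xs ! pos xs v = v"
proof -
  assume "v \<in> set xs"
  then obtain i where "i < length xs" "xs ! i = v" by (auto simp: in_set_conv_nth)
  then show ?thesis unfolding pos_def by (metis (mono_tags, lifting) LeastI)
qed

lemma pos_inj: "v \<in> set xs \<Longrightarrow> u \<in> set xs \<Longrightarrow> pos xs u = pos xs v \<Longrightarrow> u = v"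
  by (metis nth_pos)

lemma set_take_pos: "distinct xs \<Longrightarrow> set (take a xs) = {v \<in> set xs. pos xs v < a}"
proof (intro set_eqI iffI)
  fix v assume d: "distinct xs" and "v \<in> set (take a xs)"
  then obtain i where i: "i < length (take a xs)" "take a xs ! i = v" by (auto simp: in_set_conv_nth)
  then have "v = xs ! i" "i < length xs" "i < a" by auto
  then show "v \<in> {v \<in> set xs. pos xs v < a}" using d pos_nth by fastforce
next
  fix v assume d: "distinct xs" and "v \<in> {v \<in> set xs. pos xs v < a}"
  then have "pos xs v < length xs" "xs ! pos xs v = v" "pos xs v < a" using nth_pos by fastforce+
  then show "v \<in> set (take a xs)" by (metis in_set_conv_nth length_take min_less_iff_conj nth_take)
qed

lemma dfs_label_formula:
  "distinct \<sigma> \<Longrightarrow> a \<le> length \<sigma> \<Longrightarrow> w \<notin> set (take a \<sigma>) \<Longrightarrow>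
   dfs_label E s \<sigma> a w = map (\<lambda>v. Suc (pos \<sigma> v)) (rev (filter (\<lambda>v. {v, w} \<in> E) (take a \<sigma>)))
       @ (if w = s then [0] else [])"
proof (induction a)
  case 0 then show ?case by simp
next
  case (Suc a)
  have t: "take (Suc a) \<sigma> = take a \<sigma> @ [\<sigma> ! a]" using Suc.prems by (simp add: take_Suc_conv_app_nth)
  have "w \<notin> set (take a \<sigma>)" using Suc.prems t by auto
  then have IH: "dfs_label E s \<sigma> a w = map (\<lambda>v. Suc (pos \<sigma> v)) (rev (filter (\<lambda>v. {v, w} \<in> E) (take a \<sigma>)))
       @ (if w = s then [0] else [])" using Suc by simp
  have p: "pos \<sigma> (\<sigma> ! a) = a" using Suc.prems by (intro pos_nth) auto
  show ?case using Suc.prems unfolding dfs_label.simps IH t by (simp add: p)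
qed

lemma bfs_label_formula:
  "distinct \<sigma> \<Longrightarrow> a \<le> length \<sigma> \<Longrightarrow> w \<notin> set (take a \<sigma>) \<Longrightarrow>
   bfs_label n E s \<sigma> a w = (if w = s then [n] else []) @
       map (\<lambda>v. n - Suc (pos \<sigma> v)) (filter (\<lambda>v. {v, w} \<in> E) (take a \<sigma>))"
proof (induction a)
  case 0 then show ?case by simp
next
  case (Suc a)
  have t: "take (Suc a) \<sigma> = take a \<sigma> @ [\<sigma> ! a]" using Suc.prems by (simp add: take_Suc_conv_app_nth)
  have "w \<notin> set (take a \<sigma>)" using Suc.prems t by auto
  then have IH: "bfs_label n E s \<sigma> a w = (if w = s then [n] else []) @
       map (\<lambda>v. n - Suc (pos \<sigma> v)) (filter (\<lambda>v. {v, w} \<in> E) (take a \<sigma>))" using Suc by simp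
  have p: "pos \<sigma> (\<sigma> ! a) = a" using Suc.prems by (intro pos_nth) auto
  show ?case using Suc.prems unfolding bfs_label.simps IH t by (simp add: p)
qed

lemma dfs_label_const:
  "a \<le> b \<Longrightarrow> (\<forall>i. a \<le> i \<and> i < b \<longrightarrow> {\<sigma> ! i, w} \<notin> E) \<Longrightarrow> dfs_label E s \<sigma> b w = dfs_label E s \<sigma> a w"
  by (induction b) (auto simp: le_Suc_eq)

lemma bfs_label_const:
  "a \<le> b \<Longrightarrow> (\<forall>i. a \<le> i \<and> i < b \<longrightarrow> {\<sigma> ! i, w} \<notin> E) \<Longrightarrow> bfs_label n E s \<sigma> b w = bfs_label n E s \<sigma> a w"
  by (induction b) (auto simp: le_Suc_eq)

lemma search_label_const:
  "a \<le> b \<Longrightarrow> (\<forall>i. a \<le> i \<and> i < b \<longrightarrow> {\<sigma> ! i, w} \<notin> E) \<Longrightarrow> search_label P V E s \<sigma> b w = search_label P V E s \<sigma> a w"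
  by (cases P) (simp_all add: search_label_def dfs_label_const bfs_label_const)

lemma dfs_label_take: "take a \<sigma> = take a \<tau> \<Longrightarrow> dfs_label E s \<sigma> a w = dfs_label E s \<tau> a w"
proof (induction a)
  case 0 then show ?case by simp
next
  case (Suc a)
  have "take a \<sigma> = take a \<tau>" by (metis Suc.prems le_add2 plus_1_eq_Suc take_take min_absorb1)
  moreover have "\<sigma> ! a = \<tau> ! a" by (metis Suc.prems lessI nth_take)
  ultimately show ?case using Suc by simp
qed

lemma bfs_label_take: "take a \<sigma> = take a \<tau> \<Longrightarrow> bfs_label n E s \<sigma> a w = bfs_label n E s \<tau> a w"
proof (induction a)
  case 0 then show ?case by simp
next
  case (Suc a)
  have "take a \<sigma> = take a \<tau>" by (metis Suc.prems le_add2 plus_1_eq_Suc take_take min_absorb1)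
  moreover have "\<sigma> ! a = \<tau> ! a" by (metis Suc.prems lessI nth_take)
  ultimately show ?case using Suc by simp
qed

lemma search_label_take:
  assumes "take a \<sigma> = take a \<tau>" shows "search_label P V E s \<sigma> a w = search_label P V E s \<tau> a w"
  using dfs_label_take[OF assms, of E s w] bfs_label_take[OF assms, of "card V" E s w]
  by (cases P) (simp_all add: search_label_def)

lemma map_less_iff:
  fixes f g :: "'a \<Rightarrow> 'b::linorder"
  assumes "\<forall>u\<in>set xs \<union> set ys. \<forall>v\<in>set xs \<union> set ys. (f u < f v \<longleftrightarrow> g u < g v)"
  shows "map f xs < map f ys \<longleftrightarrow> map g xs < map g ys"
  using assms
proof (induction xs arbitrary: ys)
  case Nil then show ?case by (cases ys) auto
next
  case (Cons a xs)
  show ?case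
  proof (cases ys)
    case Nil then show ?thesis by simp
  next
    case (Cons b ys')
    have h: "f a < f b \<longleftrightarrow> g a < g b" "f b < f a \<longleftrightarrow> g b < g a" using Cons.prems Cons by auto
    have e: "f a = f b \<longleftrightarrow> g a = g b" using h by (metis linorder_neq_iff)
    have "map f xs < map f ys' \<longleftrightarrow> map g xs < map g ys'"
      using Cons.IH[of ys'] Cons.prems Cons by auto
    then show ?thesis using Cons h e by auto
  qed
qed

lemma sorted_take_pos: "distinct \<sigma> \<Longrightarrow> sorted_wrt (\<lambda>u v. pos \<sigma> u < pos \<sigma> v) (take a \<sigma>)"
  by (auto simp: sorted_wrt_iff_nth_less pos_nth)

lemma filter_take_eq:
  assumes d: "distinct \<sigma>" "distinct \<tau>"
    and se: "{v \<in> set (take a \<sigma>). P v} = {v \<in> set (take b \<tau>). P v}"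
    and oe: "\<forall>u\<in>{v \<in> set (take a \<sigma>). P v}. \<forall>v\<in>{v \<in> set (take a \<sigma>). P v}.
               (pos \<sigma> u < pos \<sigma> v \<longleftrightarrow> pos \<tau> u < pos \<tau> v)"
  shows "filter P (take a \<sigma>) = filter P (take b \<tau>)"
proof -
  let ?A = "filter P (take a \<sigma>)" and ?B = "filter P (take b \<tau>)"
  have sA: "set ?A = {v \<in> set (take a \<sigma>). P v}" "set ?B = {v \<in> set (take b \<tau>). P v}" by auto
  have s1: "sorted_wrt (\<lambda>u v. pos \<sigma> u < pos \<sigma> v) ?A"
    by (rule sorted_wrt_filter) (rule sorted_take_pos[OF d(1)])
  have s2': "sorted_wrt (\<lambda>u v. pos \<tau> u < pos \<tau> v) ?B"
    by (rule sorted_wrt_filter) (rule sorted_take_pos[OF d(2)])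
  have s2: "sorted_wrt (\<lambda>u v. pos \<sigma> u < pos \<sigma> v) ?B"
    by (rule sorted_wrt_mono_rel[OF _ s2']) (use oe se sA in auto)
  have "map (pos \<sigma>) ?A = map (pos \<sigma>) ?B"
    apply (rule strict_sorted_equal)
    using s1 s2 se sA by (auto simp: sorted_wrt_map)
  moreover have "set ?A \<union> set ?B \<subseteq> set \<sigma>" using se sA by (auto dest: in_set_takeD)
  then have "inj_on (pos \<sigma>) (set ?A \<union> set ?B)"
    by (intro inj_onI) (metis pos_inj subsetD)
  ultimately show ?thesis by (rule map_inj_on)
qed

lemma label_transfer:
  assumes P: "P \<in> {LexDFS, LexBFS, CompLexDFS, CompLexBFS}"
    and d: "distinct \<sigma>" "distinct \<tau>" and l: "length \<sigma> = card V" "length \<tau> = card V"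
    and ab: "a \<le> card V" "b \<le> card V"
    and w: "w1 \<notin> set (take a \<sigma>)" "w2 \<notin> set (take a \<sigma>)" "w1 \<notin> set (take b \<tau>)" "w2 \<notin> set (take b \<tau>)"
      "w1 \<noteq> s" "w2 \<noteq> s"
    and se1: "{v \<in> set (take a \<sigma>). {v, w1} \<in> E} = {v \<in> set (take b \<tau>). {v, w1} \<in> E}"
    and se2: "{v \<in> set (take a \<sigma>). {v, w2} \<in> E} = {v \<in> set (take b \<tau>). {v, w2} \<in> E}"
    and oe: "\<forall>u\<in>{v \<in> set (take a \<sigma>). {v, w1} \<in> E \<or> {v, w2} \<in> E}.
             \<forall>v\<in>{v \<in> set (take a \<sigma>). {v, w1} \<in> E \<or> {v, w2} \<in> E}.
               (pos \<sigma> u < pos \<sigma> v \<longleftrightarrow> pos \<tau> u < pos \<tau> v)"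
  shows "search_label P V E s \<sigma> a w1 < search_label P V E s \<sigma> a w2 \<longleftrightarrow>
         search_label P V E s \<tau> b w1 < search_label P V E s \<tau> b w2"
proof -
  define L1 where "L1 = filter (\<lambda>v. {v, w1} \<in> E) (take a \<sigma>)"
  define L2 where "L2 = filter (\<lambda>v. {v, w2} \<in> E) (take a \<sigma>)"
  have L1': "L1 = filter (\<lambda>v. {v, w1} \<in> E) (take b \<tau>)"
    unfolding L1_def by (rule filter_take_eq[OF d se1]) (use oe in blast)
  have L2': "L2 = filter (\<lambda>v. {v, w2} \<in> E) (take b \<tau>)"
    unfolding L2_def by (rule filter_take_eq[OF d se2]) (use oe in blast)
  have sub: "set L1 \<union> set L2 \<subseteq> set \<sigma>" unfolding L1_def L2_def by (auto dest: in_set_takeD)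
  have oe': "\<forall>u\<in>set L1 \<union> set L2. \<forall>v\<in>set L1 \<union> set L2. (pos \<sigma> u < pos \<sigma> v \<longleftrightarrow> pos \<tau> u < pos \<tau> v)"
    using oe unfolding L1_def L2_def by auto
  have ps: "\<forall>v\<in>set L1 \<union> set L2. pos \<sigma> v < card V"
    using sub l nth_pos by (metis subsetD)
  have subt: "set L1 \<union> set L2 \<subseteq> set \<tau>" unfolding L1' L2' by (auto dest: in_set_takeD)
  have pt: "\<forall>v\<in>set L1 \<union> set L2. pos \<tau> v < card V"
    using subt l nth_pos by (metis subsetD)
  have lab1: "search_label P V E s \<sigma> a wi = (if P \<in> {LexDFS, CompLexDFS}
       then map (\<lambda>v. Suc (pos \<sigma> v)) (rev (filter (\<lambda>v. {v, wi} \<in> E) (take a \<sigma>)))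
       else map (\<lambda>v. card V - Suc (pos \<sigma> v)) (filter (\<lambda>v. {v, wi} \<in> E) (take a \<sigma>)))"
    if "wi \<notin> set (take a \<sigma>)" "wi \<noteq> s" for wi
    using P that d l ab by (auto simp: search_label_def dfs_label_formula bfs_label_formula)
  have lab2: "search_label P V E s \<tau> b wi = (if P \<in> {LexDFS, CompLexDFS}
       then map (\<lambda>v. Suc (pos \<tau> v)) (rev (filter (\<lambda>v. {v, wi} \<in> E) (take b \<tau>)))
       else map (\<lambda>v. card V - Suc (pos \<tau> v)) (filter (\<lambda>v. {v, wi} \<in> E) (take b \<tau>)))"
    if "wi \<notin> set (take b \<tau>)" "wi \<noteq> s" for wi
    using P that d l ab by (auto simp: search_label_def dfs_label_formula bfs_label_formula)
  show ?thesis
  proof (cases "P \<in> {LexDFS, CompLexDFS}")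
    case True
    have "map (\<lambda>v. Suc (pos \<sigma> v)) (rev L1) < map (\<lambda>v. Suc (pos \<sigma> v)) (rev L2) \<longleftrightarrow>
          map (\<lambda>v. Suc (pos \<tau> v)) (rev L1) < map (\<lambda>v. Suc (pos \<tau> v)) (rev L2)"
      by (rule map_less_iff) (use oe' in auto)
    then show ?thesis using True
      by (simp add: lab1[OF w(1) w(5)] lab1[OF w(2) w(6)] lab2[OF w(3) w(5)] lab2[OF w(4) w(6)]
          flip: L1_def L2_def L1' L2')
  next
    case False
    have "map (\<lambda>v. card V - Suc (pos \<sigma> v)) L1 < map (\<lambda>v. card V - Suc (pos \<sigma> v)) L2 \<longleftrightarrow>
          map (\<lambda>v. card V - Suc (pos \<tau> v)) L1 < map (\<lambda>v. card V - Suc (pos \<tau> v)) L2"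
    proof (rule map_less_iff, intro ballI)
      fix u v assume uv: "u \<in> set L1 \<union> set L2" "v \<in> set L1 \<union> set L2"
      then have "pos \<sigma> u < card V" "pos \<sigma> v < card V" "pos \<tau> u < card V" "pos \<tau> v < card V"
        using ps pt by auto
      moreover have "pos \<sigma> v < pos \<sigma> u \<longleftrightarrow> pos \<tau> v < pos \<tau> u" using oe' uv by auto
      ultimately show "card V - Suc (pos \<sigma> u) < card V - Suc (pos \<sigma> v) \<longleftrightarrow>
          card V - Suc (pos \<tau> u) < card V - Suc (pos \<tau> v)" by linarith
    qed
    then show ?thesis using False
      by (simp add: lab1[OF w(1) w(5)] lab1[OF w(2) w(6)] lab2[OF w(3) w(5)] lab2[OF w(4) w(6)]
          flip: L1_def L2_def L1' L2')
  qed
qed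

definition Lrel :: "'a set set \<Rightarrow> 'a list \<Rightarrow> 'a \<Rightarrow> 'a \<Rightarrow> bool" where
  "Lrel E \<sigma> v u \<longleftrightarrow> v \<in> set \<sigma> \<and> u \<in> set \<sigma> \<and> pos \<sigma> u < pos \<sigma> v \<and> {u, v} \<in> E \<and>
     (\<forall>z\<in>set \<sigma>. pos \<sigma> u < pos \<sigma> z \<and> pos \<sigma> z < pos \<sigma> v \<longrightarrow> {z, v} \<notin> E)"

lemma L_tree_vertex:
  assumes d: "distinct \<sigma>"
  shows "L_tree_edges E \<sigma> = {{v, u} | v u. Lrel E \<sigma> v u}"
proof (intro set_eqI iffI)
  fix e assume "e \<in> L_tree_edges E \<sigma>"
  then obtain i j where ij: "e = {\<sigma> ! i, \<sigma> ! j}" "0 < i" "i < length \<sigma>" "j < i" "{\<sigma> ! j, \<sigma> ! i} \<in> E"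
    "\<forall>k. j < k \<and> k < i \<longrightarrow> {\<sigma> ! k, \<sigma> ! i} \<notin> E"
    unfolding L_tree_edges_def by blast
  have pi: "pos \<sigma> (\<sigma> ! i) = i" using ij d by (intro pos_nth) auto
  have pj: "pos \<sigma> (\<sigma> ! j) = j" using ij d by (intro pos_nth) auto
  have z: "{z, \<sigma> ! i} \<notin> E" if "z \<in> set \<sigma>" "j < pos \<sigma> z" "pos \<sigma> z < i" for z
    using ij(6) nth_pos[OF that(1)] that(2,3) by metis
  have "Lrel E \<sigma> (\<sigma> ! i) (\<sigma> ! j)"
    unfolding Lrel_def pi pj using ij z by auto
  then show "e \<in> {{v, u} | v u. Lrel E \<sigma> v u}" using ij by blast
next
  fix e assume "e \<in> {{v, u} | v u. Lrel E \<sigma> v u}"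
  then obtain v u where e: "e = {v, u}" and L: "Lrel E \<sigma> v u" by blast
  define i j where "i = pos \<sigma> v" and "j = pos \<sigma> u"
  have vi: "\<sigma> ! i = v" "i < length \<sigma>" and uj: "\<sigma> ! j = u" "j < length \<sigma>"
    using L nth_pos[of v \<sigma>] nth_pos[of u \<sigma>] unfolding Lrel_def i_def j_def by auto
  have "j < i" using L unfolding Lrel_def i_def j_def by auto
  moreover have "\<forall>k. j < k \<and> k < i \<longrightarrow> {\<sigma> ! k, \<sigma> ! i} \<notin> E"
  proof (intro allI impI)
    fix k assume k: "j < k \<and> k < i"
    then have "k < length \<sigma>" using vi by auto
    then have "\<sigma> ! k \<in> set \<sigma>" "pos \<sigma> (\<sigma> ! k) = k" using d pos_nth by auto
    then show "{\<sigma> ! k, \<sigma> ! i} \<notin> E" using L k vi unfolding Lrel_def i_def j_def by auto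
  qed
  moreover have "{\<sigma> ! j, \<sigma> ! i} \<in> E" using L vi uj unfolding Lrel_def by auto
  ultimately show "e \<in> L_tree_edges E \<sigma>" unfolding L_tree_edges_def e
    using vi uj by (intro CollectI exI[of _ i] exI[of _ j]) auto
qed

lemma induced_rel_mono: "U \<subseteq> U' \<Longrightarrow> induced_rel E U \<subseteq> induced_rel E U'"
  unfolding induced_rel_def by auto

lemma same_comp_mono: "same_comp E U a b \<Longrightarrow> U \<subseteq> U' \<Longrightarrow> same_comp E U' a b"
  unfolding same_comp_def using rtrancl_mono[OF induced_rel_mono] by blast

lemma same_comp_refl: "a \<in> U \<Longrightarrow> same_comp E U a a"
  unfolding same_comp_def by auto

lemma same_comp_edge: "a \<in> U \<Longrightarrow> b \<in> U \<Longrightarrow> {a, b} \<in> E \<Longrightarrow> same_comp E U a b"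
  unfolding same_comp_def induced_rel_def by auto

lemma same_comp_trans: "same_comp E U a b \<Longrightarrow> same_comp E U b c \<Longrightarrow> same_comp E U a c"
  unfolding same_comp_def by auto

lemma induced_rel_sym: "sym (induced_rel E U)"
  unfolding induced_rel_def sym_def by (auto simp: insert_commute)

lemma same_comp_sym: "same_comp E U a b \<Longrightarrow> same_comp E U b a"
  unfolding same_comp_def
  by (metis induced_rel_sym rtrancl_converseI sym_conv_converse_eq)

lemma comp_restrict:
  assumes "(a, b) \<in> (induced_rel E U)\<^sup>*" "a \<in> W" "W \<subseteq> U"
    and cl: "\<And>p q. p \<in> W \<Longrightarrow> (p, q) \<in> induced_rel E U \<Longrightarrow> q \<in> W"
  shows "(a, b) \<in> (induced_rel E W)\<^sup>* \<and> b \<in> W"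
  using assms(1)
proof (induction rule: rtrancl_induct)
  case base then show ?case using assms by auto
next
  case (step q r)
  then have "r \<in> W" using cl by blast
  then have "(q, r) \<in> induced_rel E W" using step unfolding induced_rel_def by auto
  then show ?case using step \<open>r \<in> W\<close> by (meson rtrancl.rtrancl_into_rtrancl)
qed

lemma simple_irrefl: "simple_graph V E \<Longrightarrow> {a, a} \<notin> E"
  unfolding simple_graph_def by (metis doubleton_eq_iff insert_absorb2)

lemma L_tree_eq:
  assumes d: "distinct \<sigma>" "distinct \<tau>" and st: "set \<sigma> = set \<tau>"
    and Q1: "\<And>v a. v \<in> set \<sigma> \<Longrightarrow> a \<in> set \<sigma> \<Longrightarrow> {a, v} \<in> E \<Longrightarrow>
                 (pos \<sigma> a < pos \<sigma> v \<longleftrightarrow> pos \<tau> a < pos \<tau> v)"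
    and Q2: "\<And>v a b. v \<in> set \<sigma> \<Longrightarrow> a \<in> set \<sigma> \<Longrightarrow> b \<in> set \<sigma> \<Longrightarrow> {a, v} \<in> E \<Longrightarrow> {b, v} \<in> E \<Longrightarrow>
                 pos \<sigma> a < pos \<sigma> v \<Longrightarrow> pos \<sigma> b < pos \<sigma> v \<Longrightarrow>
                 (pos \<sigma> a < pos \<sigma> b \<longleftrightarrow> pos \<tau> a < pos \<tau> b)"
  shows "L_tree_edges E \<sigma> = L_tree_edges E \<tau>"
proof -
  have "Lrel E \<sigma> v u \<longleftrightarrow> Lrel E \<tau> v u" for v u
  proof
    assume L: "Lrel E \<sigma> v u"
    then have b: "v \<in> set \<sigma>" "u \<in> set \<sigma>" "pos \<sigma> u < pos \<sigma> v" "{u, v} \<in> E" unfolding Lrel_def by auto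
    have "pos \<tau> u < pos \<tau> v" using Q1 b by blast
    moreover have "{z, v} \<notin> E" if z: "z \<in> set \<tau>" "pos \<tau> u < pos \<tau> z" "pos \<tau> z < pos \<tau> v" for z
    proof
      assume zv: "{z, v} \<in> E"
      then have "pos \<sigma> z < pos \<sigma> v" using Q1 b z st by blast
      moreover have "pos \<sigma> u < pos \<sigma> z" using Q2[of v u z] b z zv st \<open>pos \<sigma> z < pos \<sigma> v\<close> by blast
      ultimately show False using L z zv st unfolding Lrel_def by blast
    qed
    ultimately show "Lrel E \<tau> v u" using b st unfolding Lrel_def by blast
  next
    assume L: "Lrel E \<tau> v u"
    then have b: "v \<in> set \<sigma>" "u \<in> set \<sigma>" "pos \<tau> u < pos \<tau> v" "{u, v} \<in> E" using st unfolding Lrel_def by auto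
    have uv: "pos \<sigma> u < pos \<sigma> v" using Q1 b by blast
    moreover have "{z, v} \<notin> E" if z: "z \<in> set \<sigma>" "pos \<sigma> u < pos \<sigma> z" "pos \<sigma> z < pos \<sigma> v" for z
    proof
      assume zv: "{z, v} \<in> E"
      then have "pos \<tau> z < pos \<tau> v" using Q1 b z by blast
      moreover have "pos \<tau> u < pos \<tau> z" using Q2[of v u z] b z zv uv by blast
      ultimately show False using L z zv st unfolding Lrel_def by blast
    qed
    ultimately show "Lrel E \<sigma> v u" using b unfolding Lrel_def by blast
  qed
  then show ?thesis using L_tree_vertex[OF d(1)] L_tree_vertex[OF d(2)] by simp
qed

definition good :: "search \<Rightarrow> 'a set \<Rightarrow> 'a set set \<Rightarrow> 'a \<Rightarrow> 'a list \<Rightarrow> nat \<Rightarrow> bool" where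
  "good P V E s \<sigma> j \<longleftrightarrow> (\<forall>w \<in> V - set (take j \<sigma>).
     \<not> search_label P V E s \<sigma> j (\<sigma> ! j) < search_label P V E s \<sigma> j w)"

definition cgood :: "search \<Rightarrow> 'a set \<Rightarrow> 'a set set \<Rightarrow> 'a \<Rightarrow> 'a list \<Rightarrow> nat \<Rightarrow> bool" where
  "cgood P V E s \<sigma> j \<longleftrightarrow> (\<forall>w \<in> V - set (take j \<sigma>). same_comp E (V - set (take j \<sigma>)) (\<sigma> ! j) w \<longrightarrow>
     \<not> search_label P V E s \<sigma> j (\<sigma> ! j) < search_label P V E s \<sigma> j w)"

lemma good_cgood: "good P V E s \<sigma> j \<Longrightarrow> cgood P V E s \<sigma> j"
  unfolding good_def cgood_def by auto

lemma not_less_trans3: "\<not> (a::'b::linorder) < b \<Longrightarrow> \<not> b < c \<Longrightarrow> \<not> a < c"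
  by auto

lemma move:
  assumes P: "P \<in> {LexDFS, LexBFS}"
    and d: "distinct \<sigma>" and sv: "set \<sigma> = V" and h: "\<sigma> \<noteq> []" "hd \<sigma> = s"
    and cg: "\<forall>j<length \<sigma>. cgood P V E s \<sigma> j"
    and k: "0 < k" "k < length \<sigma>" and gk: "\<forall>j<k. good P V E s \<sigma> j" and bad: "\<not> good P V E s \<sigma> k"
  shows "\<exists>\<tau>. distinct \<tau> \<and> set \<tau> = V \<and> \<tau> \<noteq> [] \<and> hd \<tau> = s \<and> (\<forall>j<length \<tau>. cgood P V E s \<tau> j) \<and>
             (\<forall>j\<le>k. good P V E s \<tau> j) \<and> L_tree_edges E \<tau> = L_tree_edges E \<sigma>"
proof -
  let ?L = "search_label P V E s"
  define n where "n = length \<sigma>"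
  have cardV: "card V = n" using d sv distinct_card n_def by blast
  have finV: "finite V" using sv by auto
  have numS: "set (take j \<sigma>) = {v \<in> V. pos \<sigma> v < j}" for j using set_take_pos[OF d] sv by simp
  have psig: "pos \<sigma> (\<sigma> ! i) = i" if "i < n" for i using pos_nth d that n_def by auto
  have npos: "pos \<sigma> v < n" "\<sigma> ! pos \<sigma> v = v" if "v \<in> V" for v using nth_pos[of v \<sigma>] sv that n_def by auto
  have sin: "\<sigma> ! i \<in> V" if "i < n" for i using sv that n_def by auto
  have s0: "\<sigma> ! 0 = s" using h by (simp add: hd_conv_nth)
  have ps: "pos \<sigma> s = 0" using psig[of 0] s0 h n_def by auto
  define U where "U = V - set (take k \<sigma>)"
  have Uc: "v \<in> U \<longleftrightarrow> v \<in> V \<and> k \<le> pos \<sigma> v" for v unfolding U_def numS by auto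
  have skU: "\<sigma> ! k \<in> U" using Uc psig sin k n_def by auto
  have finU: "finite U" using finV U_def by auto
  obtain x where xU: "x \<in> U" and xmax: "\<forall>w\<in>U. \<not> ?L \<sigma> k x < ?L \<sigma> k w"
  proof -
    let ?M = "Max (?L \<sigma> k ` U)"
    have "?M \<in> ?L \<sigma> k ` U" using finU skU by (intro Max_in) auto
    then obtain x where "x \<in> U" "?L \<sigma> k x = ?M" by auto
    moreover have "\<forall>w\<in>U. ?L \<sigma> k w \<le> ?M" using finU by auto
    ultimately show ?thesis using that by (metis leD)
  qed
  define D where "D = {z. same_comp E U x z}"
  have xD: "x \<in> D" unfolding D_def using xU same_comp_refl by fast
  have DU: "D \<subseteq> U" unfolding D_def same_comp_def by auto
  have Dcl: "b \<in> D" if "a \<in> D" "same_comp E U a b" for a b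
    using that same_comp_trans unfolding D_def by fast
  have Dedge: "b \<in> D" if "a \<in> D" "b \<in> U" "{a, b} \<in> E \<or> {b, a} \<in> E" for a b
    using that Dcl DU same_comp_edge by (metis insert_commute subsetD)
  have px: "k \<le> pos \<sigma> x" "pos \<sigma> x < n" "\<sigma> ! pos \<sigma> x = x" using xU Uc npos by auto
  define m where "m = (LEAST i. k \<le> i \<and> i < n \<and> \<sigma> ! i \<in> D)"
  have m: "k \<le> m" "m < n" "\<sigma> ! m \<in> D"
    using LeastI[of "\<lambda>i. k \<le> i \<and> i < n \<and> \<sigma> ! i \<in> D" "pos \<sigma> x"] px xD unfolding m_def by auto
  have mmin: "\<sigma> ! i \<notin> D" if "k \<le> i" "i < m" for i
    using not_less_Least[of i "\<lambda>i. k \<le> i \<and> i < n \<and> \<sigma> ! i \<in> D"] that m unfolding m_def by auto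
  have mx: "m \<le> pos \<sigma> x"
    using Least_le[of "\<lambda>i. k \<le> i \<and> i < n \<and> \<sigma> ! i \<in> D" "pos \<sigma> x"] px xD unfolding m_def by auto
  define y where "y = \<sigma> ! m"
  have yD: "y \<in> D" using m y_def by auto
  have yV: "y \<in> V" using m sin y_def by auto
  have py: "pos \<sigma> y = m" using psig m y_def by auto
  have midU: "\<sigma> ! i \<in> U" if "k \<le> i" "i < m" for i using that m Uc psig sin by auto
  have F3: False if "z \<in> D" "same_comp E U z (\<sigma> ! i)" "k \<le> i" "i < m" for z i
    using that Dcl mmin by blast
  have F1: "{\<sigma> ! i, y} \<notin> E \<and> {y, \<sigma> ! i} \<notin> E" if "k \<le> i" "i < m" for i
    using Dedge[OF yD midU[OF that]] mmin[OF that] by blast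
  have F2: False if "same_comp E U w1 w2" "{y, w1} \<in> E" "{\<sigma> ! i, w2} \<in> E" "k \<le> i" "i < m" for w1 w2 i
  proof -
    have "w1 \<in> U" "w2 \<in> U" using that(1) unfolding same_comp_def by auto
    then have "w1 \<in> D" using Dedge yD that(2) by blast
    then have "w2 \<in> D" using Dcl that(1) by blast
    then show False using Dedge[OF _ midU[OF that(4,5)]] that(3) mmin[OF that(4,5)] by blast
  qed
  have xnot: "{\<sigma> ! i, x} \<notin> E" if "k \<le> i" "i < m" for i
    using Dedge[OF xD midU[OF that]] mmin[OF that] by blast
  have km: "k < m"
  proof (rule ccontr)
    assume "\<not> k < m"
    then have "m = k" using m by auto
    then have "same_comp E U (\<sigma> ! k) x" using m same_comp_sym unfolding D_def by auto
    then have "\<not> ?L \<sigma> k (\<sigma> ! k) < ?L \<sigma> k x" using cg k xU unfolding cgood_def U_def by auto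
    then have "good P V E s \<sigma> k" using xmax not_less_trans3 unfolding good_def U_def by blast
    then show False using bad by simp
  qed
  define \<pi> where "\<pi> j = (if j < k then j else if j = k then m else if j \<le> m then j - 1 else j)" for j
  define \<rho> where "\<rho> i = (if i < k then i else if i = m then k else if i < m then Suc i else i)" for i
  define \<tau> where "\<tau> = map (\<lambda>j. \<sigma> ! \<pi> j) [0..<n]"
  have lt: "length \<tau> = n" unfolding \<tau>_def by simp
  have tn: "\<tau> ! j = \<sigma> ! \<pi> j" if "j < n" for j unfolding \<tau>_def using that by simp
  have \<pi>n: "\<pi> j < n" if "j < n" for j using that km m unfolding \<pi>_def by auto
  have \<rho>n: "\<rho> i < n" if "i < n" for i using that km m unfolding \<rho>_def by auto
  have \<pi>\<rho>: "\<pi> (\<rho> i) = i" for i using km unfolding \<pi>_def \<rho>_def by auto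
  have \<rho>\<pi>: "\<rho> (\<pi> j) = j" for j using km unfolding \<pi>_def \<rho>_def by auto
  have dt: "distinct \<tau>"
  proof (subst distinct_conv_nth, intro allI impI)
    fix i j assume ij: "i < length \<tau>" "j < length \<tau>" "i \<noteq> j"
    then have "\<pi> i \<noteq> \<pi> j" using \<rho>\<pi> by metis
    then show "\<tau> ! i \<noteq> \<tau> ! j" using ij lt tn \<pi>n d n_def by (simp add: nth_eq_iff_index_eq)
  qed
  have st: "set \<tau> = V"
  proof
    show "set \<tau> \<subseteq> V" unfolding \<tau>_def using sin \<pi>n by auto
    show "V \<subseteq> set \<tau>"
    proof
      fix v assume "v \<in> V"
      then have "\<tau> ! \<rho> (pos \<sigma> v) = v" "\<rho> (pos \<sigma> v) < n" using npos tn \<rho>n \<pi>\<rho> by auto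
      then show "v \<in> set \<tau>" using lt by (metis nth_mem)
    qed
  qed
  have pt: "pos \<tau> v = \<rho> (pos \<sigma> v)" if "v \<in> V" for v
  proof -
    have "\<tau> ! \<rho> (pos \<sigma> v) = v" "\<rho> (pos \<sigma> v) < n" using that npos tn \<rho>n \<pi>\<rho> by auto
    then show ?thesis using pos_nth[OF dt] lt by metis
  qed
  have numT: "set (take j \<tau>) = {v \<in> V. \<rho> (pos \<sigma> v) < j}" for j
    using set_take_pos[OF dt] st pt by auto
  have tnil: "\<tau> \<noteq> []" using lt h n_def by auto
  have hdt: "hd \<tau> = s" using tnil lt tn[of 0] k s0 n_def h(1) unfolding \<pi>_def by (simp add: hd_conv_nth)
  have tk: "take k \<tau> = take k \<sigma>"
    by (rule nth_equalityI) (use lt n_def tn \<pi>_def in auto)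
  have tj: "take j \<tau> = take j \<sigma>" if "j \<le> k" for j
    using tk that by (metis min.absorb1 take_take)
  have R: "i < i' \<longleftrightarrow> \<rho> i < \<rho> i'" if "\<not> (i = m \<and> k \<le> i' \<and> i' < m)" "\<not> (i' = m \<and> k \<le> i \<and> i < m)" for i i'
    using that km unfolding \<rho>_def by auto
  have OE: "pos \<sigma> u < pos \<sigma> v \<longleftrightarrow> pos \<tau> u < pos \<tau> v"
    if "u \<in> V" "v \<in> V" "\<not> (u = y \<and> k \<le> pos \<sigma> v \<and> pos \<sigma> v < m)" "\<not> (v = y \<and> k \<le> pos \<sigma> u \<and> pos \<sigma> u < m)" for u v
  proof -
    have "pos \<sigma> u = m \<longleftrightarrow> u = y" "pos \<sigma> v = m \<longleftrightarrow> v = y"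
      using py that(1,2) npos y_def by metis+
    then show ?thesis using R[of "pos \<sigma> u" "pos \<sigma> v"] that pt by auto
  qed
  have Pin: "P \<in> {LexDFS, LexBFS, CompLexDFS, CompLexBFS}" using P by auto
  have l1: "length \<sigma> = card V" and l2: "length \<tau> = card V" using cardV lt n_def by auto
  have Ltree: "L_tree_edges E \<tau> = L_tree_edges E \<sigma>"
  proof -
    have "L_tree_edges E \<sigma> = L_tree_edges E \<tau>"
    proof (rule L_tree_eq[OF d dt])
      show "set \<sigma> = set \<tau>" using sv st by simp
    next
      fix v a assume va: "v \<in> set \<sigma>" "a \<in> set \<sigma>" "{a, v} \<in> E"
      show "pos \<sigma> a < pos \<sigma> v \<longleftrightarrow> pos \<tau> a < pos \<tau> v"
      proof (rule OE)
        show "a \<in> V" "v \<in> V" using va sv by auto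
        show "\<not> (a = y \<and> k \<le> pos \<sigma> v \<and> pos \<sigma> v < m)"
          using F1[of "pos \<sigma> v"] npos[of v] va sv by auto
        show "\<not> (v = y \<and> k \<le> pos \<sigma> a \<and> pos \<sigma> a < m)"
          using F1[of "pos \<sigma> a"] npos[of a] va sv by auto
      qed
    next
      fix v a b assume vab: "v \<in> set \<sigma>" "a \<in> set \<sigma>" "b \<in> set \<sigma>" "{a, v} \<in> E" "{b, v} \<in> E"
        "pos \<sigma> a < pos \<sigma> v" "pos \<sigma> b < pos \<sigma> v"
      show "pos \<sigma> a < pos \<sigma> b \<longleftrightarrow> pos \<tau> a < pos \<tau> b"
      proof (rule OE)
        show "a \<in> V" "b \<in> V" using vab sv by auto
        show "\<not> (a = y \<and> k \<le> pos \<sigma> b \<and> pos \<sigma> b < m)"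
        proof
          assume H: "a = y \<and> k \<le> pos \<sigma> b \<and> pos \<sigma> b < m"
          then have "m < pos \<sigma> v" using vab py by auto
          then have "v \<in> U" using Uc vab sv km by auto
          then show False using F2[of v v "pos \<sigma> b"] same_comp_refl[of v U E] H vab npos[of b] sv by auto
        qed
        show "\<not> (b = y \<and> k \<le> pos \<sigma> a \<and> pos \<sigma> a < m)"
        proof
          assume H: "b = y \<and> k \<le> pos \<sigma> a \<and> pos \<sigma> a < m"
          then have "m < pos \<sigma> v" using vab py by auto
          then have "v \<in> U" using Uc vab sv km by auto
          then show False using F2[of v v "pos \<sigma> a"] same_comp_refl[of v U E] H vab npos[of a] sv by auto
        qed
      qed
    qed
    then show ?thesis by simp
  qed
  have gA: "good P V E s \<tau> j \<and> cgood P V E s \<tau> j" if j: "j < k" for j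
  proof -
    have tjj: "take j \<tau> = take j \<sigma>" using tj j by auto
    have tjn: "\<tau> ! j = \<sigma> ! j" using tn j k n_def unfolding \<pi>_def by auto
    have eqL: "?L \<tau> j w = ?L \<sigma> j w" for w using search_label_take[OF tjj] by simp
    have "good P V E s \<sigma> j" "cgood P V E s \<sigma> j" using gk cg j k by auto
    then show ?thesis unfolding good_def cgood_def tjj tjn eqL by auto
  qed
  have gB: "good P V E s \<tau> k"
  proof -
    have tkk: "\<tau> ! k = y" using tn k n_def unfolding \<pi>_def y_def by auto
    have eqL: "?L \<tau> k w = ?L \<sigma> k w" for w using search_label_take[OF tk] by simp
    have c1: "?L \<sigma> m y = ?L \<sigma> k y" by (rule search_label_const) (use m F1 in auto)
    have c2: "?L \<sigma> m x = ?L \<sigma> k x" by (rule search_label_const) (use m xnot in auto)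
    have xm: "x \<in> V - set (take m \<sigma>)" using px mx numS xU Uc by auto
    have DUm: "D \<subseteq> V - set (take m \<sigma>)"
    proof
      fix z assume z: "z \<in> D"
      then have "z \<in> U" using DU by auto
      then have zz: "z \<in> V" "k \<le> pos \<sigma> z" using Uc by auto
      have "\<not> pos \<sigma> z < m" using mmin[of "pos \<sigma> z"] zz npos z by auto
      then show "z \<in> V - set (take m \<sigma>)" using zz numS by auto
    qed
    have scm: "same_comp E (V - set (take m \<sigma>)) y x"
    proof -
      have "(x, y) \<in> (induced_rel E U)\<^sup>*" using yD unfolding D_def same_comp_def by auto
      moreover have cl: "q \<in> D" if "p \<in> D" "(p, q) \<in> induced_rel E U" for p q
        using Dedge that unfolding induced_rel_def by auto
      ultimately have "(x, y) \<in> (induced_rel E D)\<^sup>*"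
        using comp_restrict[of x y E U D] xD DU by blast
      then have "same_comp E D x y" using xD yD unfolding same_comp_def by auto
      then have "same_comp E (V - set (take m \<sigma>)) x y" by (rule same_comp_mono[OF _ DUm])
      then show ?thesis by (rule same_comp_sym)
    qed
    have "\<not> ?L \<sigma> m y < ?L \<sigma> m x" using cg m xm scm unfolding cgood_def y_def n_def by auto
    then have "\<not> ?L \<sigma> k y < ?L \<sigma> k x" using c1 c2 by simp
    then have "\<not> ?L \<sigma> k y < ?L \<sigma> k w" if "w \<in> U" for w using xmax that not_less_trans3 by blast
    then show ?thesis unfolding good_def tk tkk eqL U_def by auto
  qed
  have sV: "s \<in> V" using s0 sin h n_def by auto
  have posy: "pos \<sigma> v = m \<longleftrightarrow> v = y" if "v \<in> V" for v using py that npos y_def by metis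
  have gC: "cgood P V E s \<tau> j" if j: "k < j" "j \<le> m" for j
  proof (unfold cgood_def, intro ballI impI)
    define a where "a = j - 1"
    have a: "k \<le> a" "a < m" "Suc a = j" using j a_def by auto
    define c where "c = \<sigma> ! a"
    have tj': "\<tau> ! j = c" using tn j m unfolding \<pi>_def c_def a_def by auto
    have pc: "pos \<sigma> c = a" using psig a m c_def by auto
    have cV: "c \<in> V" using sin a m c_def by auto
    have rj: "\<rho> (pos \<sigma> v) < j \<longleftrightarrow> pos \<sigma> v < a \<or> pos \<sigma> v = m" for v
      using a km unfolding \<rho>_def by auto
    have numTj: "set (take j \<tau>) = set (take a \<sigma>) \<union> {y}"
      unfolding numT numS using rj posy yV by auto
    fix w assume w: "w \<in> V - set (take j \<tau>)" "same_comp E (V - set (take j \<tau>)) (\<tau> ! j) w"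
    have wa: "w \<in> V - set (take a \<sigma>)" "w \<noteq> y" using w numTj by auto
    have sca: "same_comp E (V - set (take a \<sigma>)) c w"
      using same_comp_mono[OF w(2)] tj' numTj by auto
    have "\<not> ?L \<sigma> a c < ?L \<sigma> a w" using cg a m wa sca unfolding cgood_def c_def n_def by auto
    moreover have "?L \<sigma> a c < ?L \<sigma> a w \<longleftrightarrow> ?L \<tau> j c < ?L \<tau> j w"
    proof -
      have ab: "a \<le> card V" "j \<le> card V" using a m cardV by auto
      have c1: "c \<notin> set (take a \<sigma>)" using numS pc by auto
      have c2: "w \<notin> set (take a \<sigma>)" using wa by auto
      have c3: "c \<notin> set (take j \<tau>)" using numTj c1 pc a posy cV by auto
      have c4: "w \<notin> set (take j \<tau>)" using w by auto
      have sa: "s \<in> set (take a \<sigma>)" using numS ps sV a k by auto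
      have c5: "c \<noteq> s" "w \<noteq> s" using sa c1 c2 by auto
      have yc: "{v, c} \<in> E \<Longrightarrow> v \<noteq> y" for v using F1[OF a(1,2)] c_def by auto
      have yw: "{v, w} \<in> E \<Longrightarrow> v \<noteq> y" for v
      proof
        assume "{v, w} \<in> E" "v = y"
        moreover have "w \<in> U" using wa Uc numS a by auto
        ultimately have "w \<in> D" using Dedge yD by blast
        moreover have "same_comp E U w c"
          using same_comp_sym[OF sca] same_comp_mono[of E _ w c U] U_def numS a by force
        ultimately show False using F3[OF _ _ a(1,2)] c_def by blast
      qed
      have se1: "{v \<in> set (take a \<sigma>). {v, c} \<in> E} = {v \<in> set (take j \<tau>). {v, c} \<in> E}"
        using numTj yc by auto
      have se2: "{v \<in> set (take a \<sigma>). {v, w} \<in> E} = {v \<in> set (take j \<tau>). {v, w} \<in> E}"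
        using numTj yw by auto
      have oe: "\<forall>u\<in>{v \<in> set (take a \<sigma>). {v, c} \<in> E \<or> {v, w} \<in> E}.
             \<forall>v\<in>{v \<in> set (take a \<sigma>). {v, c} \<in> E \<or> {v, w} \<in> E}.
               (pos \<sigma> u < pos \<sigma> v \<longleftrightarrow> pos \<tau> u < pos \<tau> v)"
      proof (intro ballI)
        fix u v assume uv: "u \<in> {v \<in> set (take a \<sigma>). {v, c} \<in> E \<or> {v, w} \<in> E}"
          "v \<in> {v \<in> set (take a \<sigma>). {v, c} \<in> E \<or> {v, w} \<in> E}"
        then have "u \<in> V" "v \<in> V" "pos \<sigma> u < a" "pos \<sigma> v < a" using numS by auto
        moreover have "u \<noteq> y" "v \<noteq> y" using calculation py a by auto
        ultimately show "pos \<sigma> u < pos \<sigma> v \<longleftrightarrow> pos \<tau> u < pos \<tau> v"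
          using OE[of u v] by blast
      qed
      show ?thesis by (rule label_transfer[OF Pin d dt l1 l2 ab c1 c2 c3 c4 c5 se1 se2 oe])
    qed
    ultimately show "\<not> ?L \<tau> j (\<tau> ! j) < ?L \<tau> j w" using tj' by simp
  qed
  have gD: "cgood P V E s \<tau> j" if j: "m < j" "j < n" for j
  proof (unfold cgood_def, intro ballI impI)
    have tj': "\<tau> ! j = \<sigma> ! j" using tn j km unfolding \<pi>_def by auto
    have rj: "\<rho> (pos \<sigma> v) < j \<longleftrightarrow> pos \<sigma> v < j" for v
      using j km unfolding \<rho>_def by auto
    have numTj: "set (take j \<tau>) = set (take j \<sigma>)"
      unfolding numT numS using rj by auto
    define c where "c = \<sigma> ! j"
    have pc: "pos \<sigma> c = j" using psig j c_def by auto
    have cV: "c \<in> V" using sin j c_def by auto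
    fix w assume w: "w \<in> V - set (take j \<tau>)" "same_comp E (V - set (take j \<tau>)) (\<tau> ! j) w"
    have wa: "w \<in> V - set (take j \<sigma>)" using w numTj by auto
    have sca: "same_comp E (V - set (take j \<sigma>)) c w"
      using w(2) tj' numTj c_def by auto
    have WU: "V - set (take j \<sigma>) \<subseteq> U" using U_def numS j km by auto
    have "\<not> ?L \<sigma> j c < ?L \<sigma> j w" using cg j wa sca unfolding cgood_def c_def n_def by auto
    moreover have "?L \<sigma> j c < ?L \<sigma> j w \<longleftrightarrow> ?L \<tau> j c < ?L \<tau> j w"
    proof -
      have ab: "j \<le> card V" "j \<le> card V" using j cardV by auto
      have c1: "c \<notin> set (take j \<sigma>)" using numS pc by auto
      have c2: "w \<notin> set (take j \<sigma>)" using wa by auto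
      have c3: "c \<notin> set (take j \<tau>)" using numTj c1 by auto
      have c4: "w \<notin> set (take j \<tau>)" using w by auto
      have sa: "s \<in> set (take j \<sigma>)" using numS ps sV j km k by auto
      have c5: "c \<noteq> s" "w \<noteq> s" using sa c1 c2 by auto
      have se1: "{v \<in> set (take j \<sigma>). {v, c} \<in> E} = {v \<in> set (take j \<tau>). {v, c} \<in> E}"
        using numTj by auto
      have se2: "{v \<in> set (take j \<sigma>). {v, w} \<in> E} = {v \<in> set (take j \<tau>). {v, w} \<in> E}"
        using numTj by auto
      have scU: "same_comp E U p q" if "p \<in> {c, w}" "q \<in> {c, w}" for p q
      proof -
        have cw: "c \<in> V - set (take j \<sigma>)" using c1 cV by auto
        have "same_comp E (V - set (take j \<sigma>)) p q"
          using that sca same_comp_sym[OF sca] same_comp_refl[OF cw] same_comp_refl[OF wa] by auto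
        then show ?thesis by (rule same_comp_mono[OF _ WU])
      qed
      have noyz: False if "u \<in> V" "{u, p} \<in> E" "{y, q} \<in> E" "p \<in> {c, w}" "q \<in> {c, w}"
          "k \<le> pos \<sigma> u" "pos \<sigma> u < m" for u p q
        using F2[of q p "pos \<sigma> u"] scU[of q p] that npos[of u] by auto
      have oe: "\<forall>u\<in>{v \<in> set (take j \<sigma>). {v, c} \<in> E \<or> {v, w} \<in> E}.
             \<forall>v\<in>{v \<in> set (take j \<sigma>). {v, c} \<in> E \<or> {v, w} \<in> E}.
               (pos \<sigma> u < pos \<sigma> v \<longleftrightarrow> pos \<tau> u < pos \<tau> v)"
      proof (intro ballI)
        fix u v assume uv: "u \<in> {v \<in> set (take j \<sigma>). {v, c} \<in> E \<or> {v, w} \<in> E}"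
          "v \<in> {v \<in> set (take j \<sigma>). {v, c} \<in> E \<or> {v, w} \<in> E}"
        then have uvV: "u \<in> V" "v \<in> V" using numS by auto
        have n1: "\<not> (u = y \<and> k \<le> pos \<sigma> v \<and> pos \<sigma> v < m)"
        proof
          assume H: "u = y \<and> k \<le> pos \<sigma> v \<and> pos \<sigma> v < m"
          obtain p where p: "p \<in> {c, w}" "{v, p} \<in> E" using uv(2) by auto
          obtain q where q: "q \<in> {c, w}" "{y, q} \<in> E" using uv(1) H by auto
          show False using noyz[OF uvV(2) p(2) q(2) p(1) q(1)] H by auto
        qed
        have n2: "\<not> (v = y \<and> k \<le> pos \<sigma> u \<and> pos \<sigma> u < m)"
        proof
          assume H: "v = y \<and> k \<le> pos \<sigma> u \<and> pos \<sigma> u < m"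
          obtain p where p: "p \<in> {c, w}" "{u, p} \<in> E" using uv(1) by auto
          obtain q where q: "q \<in> {c, w}" "{y, q} \<in> E" using uv(2) H by auto
          show False using noyz[OF uvV(1) p(2) q(2) p(1) q(1)] H by auto
        qed
        show "pos \<sigma> u < pos \<sigma> v \<longleftrightarrow> pos \<tau> u < pos \<tau> v"
          using OE[OF uvV n1 n2] .
      qed
      show ?thesis by (rule label_transfer[OF Pin d dt l1 l2 ab c1 c2 c3 c4 c5 se1 se2 oe])
    qed
    ultimately show "\<not> ?L \<tau> j (\<tau> ! j) < ?L \<tau> j w" using tj' c_def by simp
  qed
  have allc: "\<forall>j<length \<tau>. cgood P V E s \<tau> j"
  proof (intro allI impI)
    fix j assume "j < length \<tau>"
    then have "j < n" using lt by simp
    then show "cgood P V E s \<tau> j"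
      using gA gB good_cgood gC gD by (metis linorder_neqE_nat not_le)
  qed
  have allg: "\<forall>j\<le>k. good P V E s \<tau> j"
    using gA gB by (metis le_neq_implies_less)
  show ?thesis using dt st tnil hdt allc allg Ltree by blast
qed

lemma so_P: "P \<in> {LexDFS, LexBFS} \<Longrightarrow> search_order P V E s \<sigma> \<longleftrightarrow>
    distinct \<sigma> \<and> set \<sigma> = V \<and> (\<forall>j<length \<sigma>. good P V E s \<sigma> j)"
  unfolding search_order_def good_def is_comp_search_def Let_def lex_less_iff by auto

lemma so_C1: "search_order CompLexDFS V E s \<sigma> \<longleftrightarrow>
    distinct \<sigma> \<and> set \<sigma> = V \<and> (\<forall>j<length \<sigma>. cgood LexDFS V E s \<sigma> j)"
proof -
  have eq: "search_label CompLexDFS = search_label LexDFS" by (intro ext) (simp add: search_label_def)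
  show ?thesis unfolding search_order_def cgood_def is_comp_search_def Let_def lex_less_iff eq by auto
qed

lemma so_C2: "search_order CompLexBFS V E s \<sigma> \<longleftrightarrow>
    distinct \<sigma> \<and> set \<sigma> = V \<and> (\<forall>j<length \<sigma>. cgood LexBFS V E s \<sigma> j)"
proof -
  have eq: "search_label CompLexBFS = search_label LexBFS" by (intro ext) (simp add: search_label_def)
  show ?thesis unfolding search_order_def cgood_def is_comp_search_def Let_def lex_less_iff eq by auto
qed

lemma main_ind:
  assumes P: "P \<in> {LexDFS, LexBFS}" and conn: "graph_connected V E"
  shows "length \<sigma> - d = N \<Longrightarrow> distinct \<sigma> \<Longrightarrow> set \<sigma> = V \<Longrightarrow> \<sigma> \<noteq> [] \<Longrightarrow> hd \<sigma> = s \<Longrightarrow>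
    (\<forall>j<length \<sigma>. cgood P V E s \<sigma> j) \<Longrightarrow> (\<forall>j<d. good P V E s \<sigma> j) \<Longrightarrow>
    \<exists>\<tau>. distinct \<tau> \<and> set \<tau> = V \<and> \<tau> \<noteq> [] \<and> hd \<tau> = s \<and> (\<forall>j<length \<tau>. good P V E s \<tau> j) \<and>
        L_tree_edges E \<tau> = L_tree_edges E \<sigma>"
proof (induction N arbitrary: \<sigma> d rule: less_induct)
  case (less N \<sigma> d)
  show ?case
  proof (cases "length \<sigma> \<le> d")
    case True
    then show ?thesis using less.prems by auto
  next
    case False
    show ?thesis
    proof (cases "good P V E s \<sigma> d")
      case True
      have "\<forall>j<Suc d. good P V E s \<sigma> j" using True less.prems by (auto simp: less_Suc_eq)
      then show ?thesis using less.IH[of "length \<sigma> - Suc d" \<sigma> "Suc d"] less.prems False by auto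
    next
      case bad: False
      have d0: "0 < d"
      proof (rule ccontr)
        assume "\<not> 0 < d"
        then have "d = 0" by simp
        have "cgood P V E s \<sigma> 0" using less.prems by auto
        moreover have "\<sigma> ! 0 \<in> V" using less.prems by (metis nth_mem length_greater_0_conv)
        ultimately have "good P V E s \<sigma> 0" using conn unfolding cgood_def good_def graph_connected_def by auto
        then show False using bad \<open>d = 0\<close> by simp
      qed
      obtain \<tau> where \<tau>: "distinct \<tau>" "set \<tau> = V" "\<tau> \<noteq> []" "hd \<tau> = s" "\<forall>j<length \<tau>. cgood P V E s \<tau> j"
        "\<forall>j\<le>d. good P V E s \<tau> j" "L_tree_edges E \<tau> = L_tree_edges E \<sigma>"
        using move[OF P less.prems(2-6) d0 _ less.prems(7) bad] False by auto
      have "length \<tau> = length \<sigma>" using \<tau>(1,2) less.prems(2,3) by (metis distinct_card)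
      moreover have g: "\<forall>j<Suc d. good P V E s \<tau> j" using \<tau>(6) by (auto simp: less_Suc_eq_le)
      ultimately have lt: "length \<tau> - Suc d < N" using less.prems(1) False by auto
      obtain \<tau>' where "distinct \<tau>' \<and> set \<tau>' = V \<and> \<tau>' \<noteq> [] \<and> hd \<tau>' = s \<and> (\<forall>j<length \<tau>'. good P V E s \<tau>' j) \<and>
        L_tree_edges E \<tau>' = L_tree_edges E \<tau>"
        using less.IH[OF lt refl \<tau>(1) \<tau>(2) \<tau>(3) \<tau>(4) \<tau>(5) g] by blast
      then show ?thesis using \<tau>(7) by metis
    qed
  qed
qed

lemma pair_eq:
  assumes P: "P \<in> {LexDFS, LexBFS}" and conn: "graph_connected V E"
    and C: "\<And>\<sigma>. search_order Pc V E s \<sigma> \<longleftrightarrow> distinct \<sigma> \<and> set \<sigma> = V \<and> (\<forall>j<length \<sigma>. cgood P V E s \<sigma> j)"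
  shows "is_L_tree P V E s T \<longleftrightarrow> is_L_tree Pc V E s T"
proof
  assume "is_L_tree P V E s T"
  then obtain \<sigma> where o: "search_order P V E s \<sigma>" "\<sigma> \<noteq> []" "hd \<sigma> = s" "L_tree_edges E \<sigma> = T"
    unfolding is_L_tree_def by blast
  have g: "distinct \<sigma>" "set \<sigma> = V" "\<forall>j<length \<sigma>. good P V E s \<sigma> j" using o(1) so_P[OF P, of V E s \<sigma>] by auto
  have "search_order Pc V E s \<sigma>" unfolding C using g by (simp add: good_cgood)
  then show "is_L_tree Pc V E s T" unfolding is_L_tree_def using o by blast
next
  assume "is_L_tree Pc V E s T"
  then obtain \<sigma> where s: "search_order Pc V E s \<sigma>" "\<sigma> \<noteq> []" "hd \<sigma> = s" "L_tree_edges E \<sigma> = T"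
    unfolding is_L_tree_def by blast
  then have "distinct \<sigma>" "set \<sigma> = V" "\<forall>j<length \<sigma>. cgood P V E s \<sigma> j" using C by auto
  then obtain \<tau> where "distinct \<tau> \<and> set \<tau> = V \<and> \<tau> \<noteq> [] \<and> hd \<tau> = s \<and> (\<forall>j<length \<tau>. good P V E s \<tau> j) \<and>
        L_tree_edges E \<tau> = L_tree_edges E \<sigma>"
    using main_ind[OF P conn, where \<sigma>=\<sigma> and d=0, OF refl] s by auto
  then have "search_order P V E s \<tau> \<and> \<tau> \<noteq> [] \<and> hd \<tau> = s \<and> L_tree_edges E \<tau> = T"
    using so_P[OF P, of V E s \<tau>] s(4) by auto
  then show "is_L_tree P V E s T" unfolding is_L_tree_def by blast
qed

theorem lemma14:
  fixes V :: "'a set" and E T :: "'a set set" and s :: 'a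
  assumes "simple_graph V E" and "graph_connected V E"
    and "spanning_tree V E T" and "s \<in> V"
  shows "(is_L_tree LexDFS V E s T \<longleftrightarrow> is_L_tree CompLexDFS V E s T) \<and>
         (is_L_tree LexBFS V E s T \<longleftrightarrow> is_L_tree CompLexBFS V E s T)"
proof
  show "is_L_tree LexDFS V E s T \<longleftrightarrow> is_L_tree CompLexDFS V E s T"
    by (rule pair_eq[of LexDFS V E CompLexDFS s T, OF _ assms(2) so_C1]) simp
  show "is_L_tree LexBFS V E s T \<longleftrightarrow> is_L_tree CompLexBFS V E s T"
    by (rule pair_eq[of LexBFS V E CompLexBFS s T, OF _ assms(2) so_C2]) simp
qed

end
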